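(* For every integer $k$ with $1\le k\le p$, the mechanism $RC_k$ subgame perfect implements the supermajority rule $Maj_k$: for every preference profile $R$, every subgame-perfect equilibrium yields the outcome $Maj_k(R)$, and some subgame-perfect equilibrium yields $Maj_k(R)$.
   Context: Agents $I=\{1,\dots,n\}$, $n=2p+1$, with complete information; options $A=\{sq,x\}$ (status quo and alternative); strict preferences over $A$; lotteries compared by stochastic dominance (an agent preferring $y$ weakly (strictly) prefers $\beta$ to $\eta$ iff $\beta(y)\ge\eta(y)$ ($>$)). Supermajority rule: $Maj_k(R)=x$ if $|\{i: x\,R_i\,sq\}|\ge p+k$, and $Maj_k(R)=sq$ otherwise. Mechanism $RC_k$: Voting stage: each agent simultaneously votes $v_i\in A$; the profile $v$ and the winner are announced, the winner being $x$ if at least $p+k$ agents vote $x$ and $sq$ otherwise. Confirmation stage: let $\bar t=p+k$ if $sq$ is the Voting-stage winner and $\bar t=p+2-k$ otherwise; $\bar t$ agents are drawn uniformly at random and ordered uniformly, $\pi_1,\dots,\pi_{\bar t}$; sequentially, as long as nobody has announced $Y$, agent $\pi_t$ announces $Y$ or $N$. If some agent announces $Y$ the outcome is the Voting-stage winner; if all announce $N$, the outcome is the lottery assigning to each option its share of Voting-stage votes ($|\{i:v_i=y\}|/n$ for $y\in A$). *)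

theory Defs
  imports Complex_Main
begin

datatype opt = SQ | X

text \<open>Agents are 0,...,n-1 with n = 2p+1.  A preference profile R assigns to every
agent its (strictly) preferred option.  A lottery over {SQ, X} is represented by the
probability it assigns to X (a real number in [0,1]).\<close>

definition nag :: "nat \<Rightarrow> nat" where
  "nag p = 2 * p + 1"

definition cntX :: "opt list \<Rightarrow> nat" where
  "cntX v = length (filter (\<lambda>a. a = X) v)"

definition Maj :: "nat \<Rightarrow> nat \<Rightarrow> (nat \<Rightarrow> opt) \<Rightarrow> opt" where
  "Maj p k R = (if card {i. i < nag p \<and> R i = X} \<ge> p + k then X else SQ)"

definition winner :: "nat \<Rightarrow> nat \<Rightarrow> opt list \<Rightarrow> opt" where
  "winner p k v = (if cntX v \<ge> p + k then X else SQ)"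

definition tbar :: "nat \<Rightarrow> nat \<Rightarrow> opt list \<Rightarrow> nat" where
  "tbar p k v = (if winner p k v = SQ then p + k else p + 2 - k)"

text \<open>Possible outcomes of the chance move: ordered draws of t distinct agents.\<close>
definition draws :: "nat \<Rightarrow> nat \<Rightarrow> nat list set" where
  "draws p t = {\<pi>. distinct \<pi> \<and> set \<pi> \<subseteq> {..<nag p} \<and> length \<pi> = t}"

definition lotX :: "opt \<Rightarrow> real" where
  "lotX y = (if y = X then 1 else 0)"

text \<open>Confirmation strategies: conf i v \<pi> t = True means agent i announces Y
at the node where the vote profile is v, the ordered draw is \<pi>, it is the turn of
position t and all earlier drawn agents announced N.\<close>
definition nodeX :: "nat \<Rightarrow> nat \<Rightarrow> (nat \<Rightarrow> opt list \<Rightarrow> nat list \<Rightarrow> nat \<Rightarrow> bool)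
    \<Rightarrow> opt list \<Rightarrow> nat list \<Rightarrow> nat \<Rightarrow> real" where
  "nodeX p k conf v \<pi> t =
     (if \<exists>j. t \<le> j \<and> j < length \<pi> \<and> conf (\<pi> ! j) v \<pi> j
      then lotX (winner p k v)
      else real (cntX v) / real (nag p))"

definition chanceX :: "nat \<Rightarrow> nat \<Rightarrow> (nat \<Rightarrow> opt list \<Rightarrow> nat list \<Rightarrow> nat \<Rightarrow> bool)
    \<Rightarrow> opt list \<Rightarrow> real" where
  "chanceX p k conf v =
     (\<Sum>\<pi>\<in>draws p (tbar p k v). nodeX p k conf v \<pi> 0) / real (card (draws p (tbar p k v)))"

definition votes :: "nat \<Rightarrow> (nat \<Rightarrow> opt) \<Rightarrow> opt list" where
  "votes p vote = map vote [0..<nag p]"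

definition rootX :: "nat \<Rightarrow> nat \<Rightarrow> (nat \<Rightarrow> opt)
    \<Rightarrow> (nat \<Rightarrow> opt list \<Rightarrow> nat list \<Rightarrow> nat \<Rightarrow> bool) \<Rightarrow> real" where
  "rootX p k vote conf = chanceX p k conf (votes p vote)"

definition probOf :: "opt \<Rightarrow> real \<Rightarrow> real" where
  "probOf y q = (if y = X then q else 1 - q)"

text \<open>Stochastic dominance: an agent preferring y strictly prefers q1 to q2.\<close>
definition spref :: "opt \<Rightarrow> real \<Rightarrow> real \<Rightarrow> bool" where
  "spref y q1 q2 \<longleftrightarrow> probOf y q1 > probOf y q2"

text \<open>Subgame perfect equilibrium of RC_k at profile R: a Nash equilibrium (no
strictly SD-preferred unilateral deviation) in every subgame: the whole game, the
subgame starting at the chance node after every vote profile, and the subgame starting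
at every decision node of the confirmation stage.\<close>
definition SPE :: "nat \<Rightarrow> nat \<Rightarrow> (nat \<Rightarrow> opt) \<Rightarrow> (nat \<Rightarrow> opt)
    \<Rightarrow> (nat \<Rightarrow> opt list \<Rightarrow> nat list \<Rightarrow> nat \<Rightarrow> bool) \<Rightarrow> bool" where
  "SPE p k R vote conf \<longleftrightarrow>
     (\<forall>i < nag p. \<forall>a c.
        \<not> spref (R i) (rootX p k (vote(i := a)) (conf(i := c))) (rootX p k vote conf)) \<and>
     (\<forall>v. length v = nag p \<longrightarrow> (\<forall>i < nag p. \<forall>c.
        \<not> spref (R i) (chanceX p k (conf(i := c)) v) (chanceX p k conf v))) \<and>
     (\<forall>v \<pi> t. length v = nag p \<and> \<pi> \<in> draws p (tbar p k v) \<and> t < length \<pi> \<longrightarrow>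
        (\<forall>i < nag p. \<forall>c.
          \<not> spref (R i) (nodeX p k (conf(i := c)) v \<pi> t) (nodeX p k conf v \<pi> t)))"

end

theory Submission
  imports Defs
begin


lemma opt_ne [simp]: "(y \<noteq> SQ) = (y = X)" "(y \<noteq> X) = (y = SQ)"
  by (cases y; simp)+

definition tb :: "nat \<Rightarrow> nat \<Rightarrow> opt \<Rightarrow> nat" where
  "tb p k w = (if w = SQ then p + k else p + 2 - k)"

definition Qw :: "nat \<Rightarrow> nat \<Rightarrow> (nat \<Rightarrow> opt) \<Rightarrow> opt \<Rightarrow> real" where
  "Qw p k R w = real (card {\<pi> \<in> draws p (tb p k w). \<forall>x\<in>set \<pi>. R x \<noteq> w}) / real (card (draws p (tb p k w)))"

definition Fv :: "nat \<Rightarrow> nat \<Rightarrow> (nat \<Rightarrow> opt) \<Rightarrow> opt list \<Rightarrow> nat list \<Rightarrow> nat \<Rightarrow> real" where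
  "Fv p k R v \<pi> t = (if \<exists>j. t \<le> j \<and> j < length \<pi> \<and> R (\<pi> ! j) = winner p k v
      then lotX (winner p k v) else real (cntX v) / real (nag p))"

definition C3 :: "nat \<Rightarrow> nat \<Rightarrow> (nat \<Rightarrow> opt) \<Rightarrow> (nat \<Rightarrow> opt list \<Rightarrow> nat list \<Rightarrow> nat \<Rightarrow> bool) \<Rightarrow> bool" where
  "C3 p k R conf \<longleftrightarrow> (\<forall>v \<pi> t. length v = nag p \<and> \<pi> \<in> draws p (tbar p k v) \<and> t < length \<pi> \<longrightarrow>
        (\<forall>i < nag p. \<forall>c.
          \<not> spref (R i) (nodeX p k (conf(i := c)) v \<pi> t) (nodeX p k conf v \<pi> t)))"

definition conf0 :: "nat \<Rightarrow> nat \<Rightarrow> (nat \<Rightarrow> opt) \<Rightarrow> (nat \<Rightarrow> opt list \<Rightarrow> nat list \<Rightarrow> nat \<Rightarrow> bool)" where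
  "conf0 p k R = (\<lambda>i v \<pi> t. R i = winner p k v)"

lemma tbar_tb: "tbar p k v = tb p k (winner p k v)"
  by (simp add: tbar_def tb_def)

lemma draws_finite: "finite (draws p t)"
proof -
  have "draws p t \<subseteq> {xs. set xs \<subseteq> {..<nag p} \<and> length xs = t}"
    by (auto simp: draws_def)
  thus ?thesis using finite_lists_length_eq[of "{..<nag p}" t] finite_subset by blast
qed

lemma draws_card_pos: "t \<le> nag p \<Longrightarrow> card (draws p t) > 0"
proof -
  assume "t \<le> nag p"
  hence "[0..<t] \<in> draws p t" by (auto simp: draws_def)
  thus ?thesis using draws_finite card_gt_0_iff by blast
qed

lemma tb_le: "1 \<le> k \<Longrightarrow> k \<le> p \<Longrightarrow> tb p k w \<le> nag p"
  by (auto simp: tb_def nag_def)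

lemma bad_empty:
  assumes "card {i. i < nag p \<and> R i \<noteq> w} < t"
  shows "{\<pi> \<in> draws p t. \<forall>x\<in>set \<pi>. R x \<noteq> w} = {}"
proof (rule ccontr)
  assume "{\<pi> \<in> draws p t. \<forall>x\<in>set \<pi>. R x \<noteq> w} \<noteq> {}"
  then obtain \<pi> where d: "\<pi> \<in> draws p t" and a: "\<forall>x\<in>set \<pi>. R x \<noteq> w" by blast
  have "set \<pi> \<subseteq> {i. i < nag p \<and> R i \<noteq> w}" using d a by (auto simp: draws_def)
  hence "card (set \<pi>) \<le> card {i. i < nag p \<and> R i \<noteq> w}" by (intro card_mono) auto
  moreover have "card (set \<pi>) = t" using d distinct_card by (auto simp: draws_def)
  ultimately show False using assms by simp
qed

lemma bad_ne:
  assumes "t \<le> card {i. i < nag p \<and> R i \<noteq> w}"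
  shows "{\<pi> \<in> draws p t. \<forall>x\<in>set \<pi>. R x \<noteq> w} \<noteq> {}"
proof -
  let ?A = "{i. i < nag p \<and> R i \<noteq> w}"
  obtain xs where xs: "set xs = ?A" "distinct xs" using finite_distinct_list[of ?A] by auto
  have l: "length xs = card ?A" using xs distinct_card by fastforce
  have "take t xs \<in> {\<pi> \<in> draws p t. \<forall>x\<in>set \<pi>. R x \<noteq> w}"
    using xs l assms set_take_subset[of t xs] by (auto simp: draws_def)
  thus ?thesis by blast
qed

lemma Qw_zero: "card {i. i < nag p \<and> R i \<noteq> w} < tb p k w \<Longrightarrow> Qw p k R w = 0"
  unfolding Qw_def by (subst bad_empty[of p R w "tb p k w"]) auto

lemma Qw_pos: "tb p k w \<le> card {i. i < nag p \<and> R i \<noteq> w} \<Longrightarrow> 1 \<le> k \<Longrightarrow> k \<le> p \<Longrightarrow> Qw p k R w > 0"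
proof -
  assume a: "tb p k w \<le> card {i. i < nag p \<and> R i \<noteq> w}" "1 \<le> k" "k \<le> p"
  have "card {\<pi> \<in> draws p (tb p k w). \<forall>x\<in>set \<pi>. R x \<noteq> w} > 0"
    using bad_ne[OF a(1)] draws_finite by (simp add: card_gt_0_iff)
  moreover have "card (draws p (tb p k w)) > 0" using draws_card_pos tb_le a by blast
  ultimately show ?thesis by (simp add: Qw_def)
qed

lemma Qw_range: "0 \<le> Qw p k R w" "Qw p k R w \<le> 1"
proof -
  have "card {\<pi> \<in> draws p (tb p k w). \<forall>x\<in>set \<pi>. R x \<noteq> w} \<le> card (draws p (tb p k w))"
    using draws_finite by (intro card_mono) auto
  thus "0 \<le> Qw p k R w" "Qw p k R w \<le> 1" by (auto simp: Qw_def divide_le_eq_1)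
qed

lemma card_neX: "card {i. i < nag p \<and> R i \<noteq> X} = nag p - card {i. i < nag p \<and> R i = X}"
proof -
  have "{i. i < nag p \<and> R i \<noteq> X} = {..<nag p} - {i. i < nag p \<and> R i = X}" by auto
  thus ?thesis by (simp only:) (subst card_Diff_subset, auto)
qed

lemma card_neSQ: "{i. i < nag p \<and> R i \<noteq> SQ} = {i. i < nag p \<and> R i = X}"
  by simp

lemma cnt_votes: "cntX (votes p f) = card {i. i < nag p \<and> f i = X}"
  unfolding cntX_def votes_def length_filter_conv_card by (rule arg_cong[where f=card]) auto

lemma len_votes: "length (votes p f) = nag p"
  by (simp add: votes_def)

lemma b_range: "length v = nag p \<Longrightarrow> 0 \<le> real (cntX v) / real (nag p) \<and> real (cntX v) / real (nag p) \<le> 1"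
proof -
  assume "length v = nag p"
  hence "cntX v \<le> nag p" unfolding cntX_def by (metis length_filter_le)
  moreover have "nag p > 0" by (simp add: nag_def)
  ultimately show ?thesis by (simp add: divide_le_eq_1)
qed

lemma spref_iff: "spref y q1 q2 \<longleftrightarrow> (if y = X then q1 > q2 else q2 > q1)"
  by (auto simp: spref_def probOf_def)

lemma nspref_trans: "\<not> spref y q1 q2 \<Longrightarrow> \<not> spref y q2 q3 \<Longrightarrow> \<not> spref y q1 q3"
  by (auto simp: spref_iff split: if_splits)

lemma pref_best: "0 \<le> q \<Longrightarrow> q \<le> 1 \<Longrightarrow> \<not> spref w q (lotX w)"
  by (cases w) (auto simp: spref_iff lotX_def)

lemma pref_worst: "0 \<le> q \<Longrightarrow> q \<le> 1 \<Longrightarrow> y \<noteq> w \<Longrightarrow> \<not> spref y (lotX w) q"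
  by (cases w; cases y) (auto simp: spref_iff lotX_def)

lemma pref_best_strict: "0 \<le> q \<Longrightarrow> q \<le> 1 \<Longrightarrow> q \<noteq> lotX w \<Longrightarrow> spref w (lotX w) q"
  by (cases w) (auto simp: spref_iff lotX_def)

lemma pref_worst_strict: "0 \<le> q \<Longrightarrow> q \<le> 1 \<Longrightarrow> q \<noteq> lotX w \<Longrightarrow> y \<noteq> w \<Longrightarrow> spref y q (lotX w)"
  by (cases w; cases y) (auto simp: spref_iff lotX_def)

lemma ex_step: "t < l \<Longrightarrow> (\<exists>j. t \<le> j \<and> j < l \<and> P j) = (P t \<or> (\<exists>j. Suc t \<le> j \<and> j < l \<and> P j))"
  by (metis Suc_leD le_eq_less_or_eq less_eq_Suc_le order_refl)

lemma nodeX_step: "t < length \<pi> \<Longrightarrow> nodeX p k conf v \<pi> t =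
   (if conf (\<pi>!t) v \<pi> t then lotX (winner p k v) else nodeX p k conf v \<pi> (Suc t))"
  unfolding nodeX_def by (subst ex_step) auto

lemma Fv_step: "t < length \<pi> \<Longrightarrow> Fv p k R v \<pi> t =
   (if R (\<pi>!t) = winner p k v then lotX (winner p k v) else Fv p k R v \<pi> (Suc t))"
  unfolding Fv_def by (subst ex_step) auto

lemma nodeX_cong: "(\<And>j. t \<le> j \<Longrightarrow> j < length \<pi> \<Longrightarrow> conf' (\<pi>!j) v \<pi> j = conf (\<pi>!j) v \<pi> j)
   \<Longrightarrow> nodeX p k conf' v \<pi> t = nodeX p k conf v \<pi> t"
  unfolding nodeX_def by (metis (no_types, lifting))



lemma Fv_cases: "Fv p k R v \<pi> t = lotX (winner p k v) \<or> Fv p k R v \<pi> t = real (cntX v) / real (nag p)"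
  by (simp add: Fv_def)

lemma node_char:
  assumes C: "C3 p k R conf" and lv: "length v = nag p" and pd: "\<pi> \<in> draws p (tbar p k v)"
    and tl: "t \<le> length \<pi>"
  shows "nodeX p k conf v \<pi> t = Fv p k R v \<pi> t"
  using tl
proof (induction t rule: inc_induct)
  case base
  then show ?case by (auto simp: nodeX_def Fv_def)
next
  case (step m)
  let ?i = "\<pi> ! m"
  let ?a = "lotX (winner p k v)"
  let ?b = "real (cntX v) / real (nag p)"
  let ?N = "nodeX p k conf v \<pi> (Suc m)"
  let ?Y = "nodeX p k conf v \<pi> m"
  have dist: "distinct \<pi>" and sub: "set \<pi> \<subseteq> {..<nag p}" using pd by (auto simp: draws_def)
  have ilt: "?i < nag p" using sub step(2) nth_mem by blast
  have h1: "nodeX p k (conf(?i := \<lambda>_ _ _. True)) v \<pi> m = ?a"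
    using step(2) by (simp add: nodeX_step)
  have h2: "nodeX p k (conf(?i := \<lambda>_ _ _. False)) v \<pi> m = ?N"
  proof -
    have "nodeX p k (conf(?i := \<lambda>_ _ _. False)) v \<pi> (Suc m) = ?N"
    proof (rule nodeX_cong)
      fix j assume "Suc m \<le> j" "j < length \<pi>"
      hence "\<pi> ! j \<noteq> \<pi> ! m" using dist step(2) by (simp add: nth_eq_iff_index_eq)
      thus "(conf(?i := \<lambda>_ _ _. False)) (\<pi> ! j) v \<pi> j = conf (\<pi> ! j) v \<pi> j" by simp
    qed
    thus ?thesis using step(2) by (simp add: nodeX_step)
  qed
  have c1: "\<not> spref (R ?i) ?a ?Y" using C lv pd step(2) ilt h1 unfolding C3_def by metis
  have c2: "\<not> spref (R ?i) ?N ?Y" using C lv pd step(2) ilt h2 unfolding C3_def by metis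
  have Y: "?Y = (if conf ?i v \<pi> m then ?a else ?N)" using step(2) by (simp add: nodeX_step)
  have F: "Fv p k R v \<pi> m = (if R ?i = winner p k v then ?a else Fv p k R v \<pi> (Suc m))"
    using step(2) by (simp add: Fv_step)
  have IH: "?N = Fv p k R v \<pi> (Suc m)" using step(3) .
  have br: "0 \<le> ?b" "?b \<le> 1" using b_range[OF lv] by auto
  have Nc: "?N = ?a \<or> ?N = ?b" using IH Fv_cases by metis
  show ?case
  proof (cases "?a = ?b")
    case True
    then show ?thesis using Y F IH Nc by auto
  next
    case ab: False
    show ?thesis
    proof (cases "R ?i = winner p k v")
      case True
      have "?Y = ?a"
      proof (rule ccontr)
        assume "?Y \<noteq> ?a"
        hence "?Y = ?b" using Y Nc by (auto split: if_splits)
        moreover have "spref (winner p k v) ?a ?b" using pref_best_strict br ab by metis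
        ultimately show False using c1 True by simp
      qed
      then show ?thesis using F True by simp
    next
      case False
      have "?Y = ?N"
      proof (rule ccontr)
        assume yn: "?Y \<noteq> ?N"
        hence "?Y = ?a" using Y by (auto split: if_splits)
        hence "?N = ?b" using yn Nc by auto
        moreover have "spref (R ?i) ?b ?a" using pref_worst_strict br ab False by metis
        ultimately show False using c2 \<open>?Y = ?a\<close> by simp
      qed
      then show ?thesis using F False IH by simp
    qed
  qed
qed

lemma Fv0: "Fv p k R v \<pi> 0 = lotX (winner p k v) +
   (if \<forall>x\<in>set \<pi>. R x \<noteq> winner p k v then real (cntX v) / real (nag p) - lotX (winner p k v) else 0)"
  unfolding Fv_def by (auto simp: in_set_conv_nth) (metis nth_mem)

lemma chance_formula:
  assumes k: "1 \<le> k" "k \<le> p" and lv: "length v = nag p"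
    and nd: "\<And>\<pi>. \<pi> \<in> draws p (tbar p k v) \<Longrightarrow> nodeX p k conf v \<pi> 0 = Fv p k R v \<pi> 0"
  shows "chanceX p k conf v = lotX (winner p k v) + Qw p k R (winner p k v) *
            (real (cntX v) / real (nag p) - lotX (winner p k v))"
proof -
  let ?w = "winner p k v"
  let ?D = "draws p (tb p k ?w)"
  let ?a = "lotX ?w"
  let ?d = "real (cntX v) / real (nag p) - lotX ?w"
  let ?B = "{\<pi> \<in> ?D. \<forall>x\<in>set \<pi>. R x \<noteq> ?w}"
  have fin: "finite ?D" by (rule draws_finite)
  have cp: "card ?D > 0" using draws_card_pos tb_le k by blast
  have "(\<Sum>\<pi>\<in>?D. nodeX p k conf v \<pi> 0) = (\<Sum>\<pi>\<in>?D. ?a + (if \<forall>x\<in>set \<pi>. R x \<noteq> ?w then ?d else 0))"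
    using nd by (intro sum.cong) (auto simp: tbar_tb Fv0)
  also have "\<dots> = real (card ?D) * ?a + (\<Sum>\<pi>\<in>?D. if \<forall>x\<in>set \<pi>. R x \<noteq> ?w then ?d else 0)"
    by (simp add: sum.distrib)
  also have "(\<Sum>\<pi>\<in>?D. if \<forall>x\<in>set \<pi>. R x \<noteq> ?w then ?d else 0) = (\<Sum>\<pi>\<in>?B. ?d)"
    using sum.inter_filter[OF fin, of "\<lambda>_. ?d"] by simp
  also have "\<dots> = real (card ?B) * ?d" by simp
  finally have S: "(\<Sum>\<pi>\<in>?D. nodeX p k conf v \<pi> 0) = real (card ?D) * ?a + real (card ?B) * ?d" .
  show ?thesis unfolding chanceX_def tbar_tb S Qw_def using cp by (simp add: field_simps)
qed

lemma chance_char: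
  assumes k: "1 \<le> k" "k \<le> p" and C: "C3 p k R conf" and lv: "length v = nag p"
  shows "chanceX p k conf v = lotX (winner p k v) + Qw p k R (winner p k v) *
            (real (cntX v) / real (nag p) - lotX (winner p k v))"
  using chance_formula[OF k lv] node_char[OF C lv] by simp

lemma G_range:
  assumes "0 \<le> Q" "Q \<le> 1" "0 \<le> b" "b \<le> 1"
  shows "0 \<le> lotX w + Q * (b - lotX w) \<and> lotX w + Q * (b - lotX w) \<le> 1"
proof (cases w)
  case SQ then show ?thesis using assms by (simp add: lotX_def mult_le_one)
next
  case X
  have "Q * (1 - b) \<le> 1" using assms by (simp add: mult_le_one)
  moreover have "0 \<le> Q * (1 - b)" using assms by simp
  ultimately show ?thesis using X by (simp add: lotX_def algebra_simps)
qed



lemma nodeX_conf0: "nodeX p k (conf0 p k R) v \<pi> t = Fv p k R v \<pi> t"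
  by (simp add: nodeX_def Fv_def conf0_def)

lemma dev_node:
  assumes lv: "length v = nag p"
  shows "\<not> spref (R i) (nodeX p k ((conf0 p k R)(i := c)) v \<pi> t) (Fv p k R v \<pi> t)"
proof -
  let ?w = "winner p k v"
  let ?a = "lotX ?w"
  let ?b = "real (cntX v) / real (nag p)"
  let ?E = "\<exists>j. t \<le> j \<and> j < length \<pi> \<and> R (\<pi> ! j) = ?w"
  let ?E' = "\<exists>j. t \<le> j \<and> j < length \<pi> \<and> ((conf0 p k R)(i := c)) (\<pi> ! j) v \<pi> j"
  have br: "0 \<le> ?b" "?b \<le> 1" using b_range[OF lv] by auto
  have dv: "nodeX p k ((conf0 p k R)(i := c)) v \<pi> t = (if ?E' then ?a else ?b)" by (simp add: nodeX_def)
  have fv: "Fv p k R v \<pi> t = (if ?E then ?a else ?b)" by (simp add: Fv_def)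
  have ar: "0 \<le> ?a \<and> ?a \<le> 1" by (simp add: lotX_def)
  show ?thesis
  proof (cases "R i = ?w")
    case True
    show ?thesis
    proof (cases ?E)
      case True
      then show ?thesis using dv fv pref_best[of _ ?w] br ar \<open>R i = ?w\<close> by auto
    next
      case False
      hence nE': "\<not> ?E'" using \<open>R i = ?w\<close> by (auto simp: conf0_def)
      show ?thesis unfolding dv[unfolded if_not_P[OF nE']] fv[unfolded if_not_P[OF False]] by (simp add: spref_iff)
    qed
  next
    case False
    show ?thesis
    proof (cases ?E')
      case True
      then show ?thesis using dv fv pref_worst[of _ "R i" ?w] br ar False by auto
    next
      case nE: False
      hence "\<not> ?E" using False by (auto simp: conf0_def split: if_splits) 
      then show ?thesis unfolding dv[unfolded if_not_P[OF nE]] fv[unfolded if_not_P[OF \<open>\<not> ?E\<close>]] by (simp add: spref_iff)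
    qed
  qed
qed

lemma C3_conf0: "C3 p k R (conf0 p k R)"
  unfolding C3_def using dev_node nodeX_conf0 by metis

lemma avg_pref:
  assumes "\<And>\<pi>. \<pi> \<in> D \<Longrightarrow> \<not> spref y (f \<pi>) (g \<pi>)"
  shows "\<not> spref y ((\<Sum>\<pi>\<in>D. f \<pi>) / real (card D)) ((\<Sum>\<pi>\<in>D. g \<pi>) / real (card D))"
proof (cases "y = X")
  case True
  hence "\<And>\<pi>. \<pi> \<in> D \<Longrightarrow> f \<pi> \<le> g \<pi>" using assms by (force simp: spref_iff)
  hence "(\<Sum>\<pi>\<in>D. f \<pi>) \<le> (\<Sum>\<pi>\<in>D. g \<pi>)" by (rule sum_mono)
  hence "(\<Sum>\<pi>\<in>D. f \<pi>) / real (card D) \<le> (\<Sum>\<pi>\<in>D. g \<pi>) / real (card D)" by (simp add: divide_right_mono)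
  then show ?thesis using True by (simp add: spref_iff)
next
  case False
  hence "\<And>\<pi>. \<pi> \<in> D \<Longrightarrow> g \<pi> \<le> f \<pi>" using assms by (force simp: spref_iff)
  hence "(\<Sum>\<pi>\<in>D. g \<pi>) \<le> (\<Sum>\<pi>\<in>D. f \<pi>)" by (rule sum_mono)
  hence "(\<Sum>\<pi>\<in>D. g \<pi>) / real (card D) \<le> (\<Sum>\<pi>\<in>D. f \<pi>) / real (card D)" by (simp add: divide_right_mono)
  then show ?thesis using False by (simp add: spref_iff)
qed

lemma chance_dev:
  assumes lv: "length v = nag p"
  shows "\<not> spref (R i) (chanceX p k ((conf0 p k R)(i := c)) v) (chanceX p k (conf0 p k R) v)"
  unfolding chanceX_def by (rule avg_pref) (use dev_node[OF lv] nodeX_conf0 in metis)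

lemma cnt_Maj: "winner p k (votes p R) = Maj p k R"
  by (simp add: winner_def Maj_def cnt_votes)

lemma exist_part:
  assumes k: "1 \<le> k" "k \<le> p"
  shows "SPE p k R R (conf0 p k R) \<and> rootX p k R (conf0 p k R) = lotX (Maj p k R)"
proof -
  let ?NX = "card {i. i < nag p \<and> R i = X}"
  let ?M = "Maj p k R"
  have Qz: "Qw p k R ?M = 0"
  proof (cases "p + k \<le> ?NX")
    case True
    hence "?M = X" by (simp add: Maj_def)
    moreover have "card {i. i < nag p \<and> R i \<noteq> X} < tb p k X"
      using card_neX[of p R] True k by (simp add: tb_def nag_def)
    ultimately show ?thesis using Qw_zero by metis
  next
    case False
    hence "?M = SQ" by (simp add: Maj_def)
    moreover have "card {i. i < nag p \<and> R i \<noteq> SQ} < tb p k SQ"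
      using False by (simp add: tb_def)
    ultimately show ?thesis using Qw_zero by metis
  qed
  have Gv: "\<And>v. length v = nag p \<Longrightarrow> winner p k v = ?M \<Longrightarrow> chanceX p k (conf0 p k R) v = lotX ?M"
    using chance_char[OF k C3_conf0] Qz by simp
  have root: "rootX p k R (conf0 p k R) = lotX ?M"
    unfolding rootX_def using Gv len_votes cnt_Maj by metis
  have c1: "\<forall>i < nag p. \<forall>a c. \<not> spref (R i) (rootX p k (R(i := a)) ((conf0 p k R)(i := c))) (rootX p k R (conf0 p k R))"
  proof (intro allI impI)
    fix i a c assume il: "i < nag p"
    let ?v = "votes p (R(i := a))"
    have lv: "length ?v = nag p" by (rule len_votes)
    have s1: "\<not> spref (R i) (rootX p k (R(i := a)) ((conf0 p k R)(i := c))) (chanceX p k (conf0 p k R) ?v)"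
      unfolding rootX_def by (rule chance_dev[OF lv])
    have G: "chanceX p k (conf0 p k R) ?v = lotX (winner p k ?v) + Qw p k R (winner p k ?v) *
            (real (cntX ?v) / real (nag p) - lotX (winner p k ?v))"
      by (rule chance_char[OF k C3_conf0 lv])
    have s2: "\<not> spref (R i) (chanceX p k (conf0 p k R) ?v) (lotX ?M)"
    proof (cases "R i = ?M")
      case True
      show ?thesis using G G_range[OF Qw_range b_range[OF lv, THEN conjunct1] b_range[OF lv, THEN conjunct2]]
          pref_best True by metis
    next
      case False
      have "winner p k ?v = ?M"
      proof (cases "p + k \<le> ?NX")
        case True
        hence M: "?M = X" by (simp add: Maj_def)
        have "{j. j < nag p \<and> R j = X} \<subseteq> {j. j < nag p \<and> (R(i := a)) j = X}"
          using False M by auto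
        hence "?NX \<le> cntX ?v" unfolding cnt_votes by (intro card_mono) auto
        then show ?thesis using True M by (simp add: winner_def)
      next
        case nt: False
        hence M: "?M = SQ" by (simp add: Maj_def)
        have "{j. j < nag p \<and> (R(i := a)) j = X} \<subseteq> {j. j < nag p \<and> R j = X}"
          using False M by auto
        hence "cntX ?v \<le> ?NX" unfolding cnt_votes by (intro card_mono) auto
        then show ?thesis using nt M by (simp add: winner_def)
      qed
      hence "chanceX p k (conf0 p k R) ?v = lotX ?M" using Gv lv by metis
      then show ?thesis by (simp add: spref_iff)
    qed
    show "\<not> spref (R i) (rootX p k (R(i := a)) ((conf0 p k R)(i := c))) (rootX p k R (conf0 p k R))"
      using nspref_trans[OF s1 s2] root by simp
  qed
  have "SPE p k R R (conf0 p k R)"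
    unfolding SPE_def using c1 chance_dev C3_conf0[unfolded C3_def] by blast
  thus ?thesis using root by simp
qed



lemma SPE_C3: "SPE p k R vote conf \<Longrightarrow> C3 p k R conf"
  unfolding SPE_def C3_def by blast

lemma unique_part:
  assumes k: "1 \<le> k" "k \<le> p" and S: "SPE p k R vote conf"
  shows "rootX p k vote conf = lotX (Maj p k R)"
proof -
  let ?NX = "card {i. i < nag p \<and> R i = X}"
  let ?n = "real (nag p)"
  have np: "?n > 0" by (simp add: nag_def)
  have C: "C3 p k R conf" using S by (rule SPE_C3)
  have G: "\<And>v. length v = nag p \<Longrightarrow> chanceX p k conf v = lotX (winner p k v) + Qw p k R (winner p k v) *
            (real (cntX v) / ?n - lotX (winner p k v))"
    using chance_char[OF k C] by blast
  have root: "\<And>i a. i < nag p \<Longrightarrow> \<not> spref (R i) (chanceX p k conf (votes p (vote(i := a)))) (chanceX p k conf (votes p vote))"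
  proof -
    fix i a assume "i < nag p"
    hence "\<not> spref (R i) (rootX p k (vote(i := a)) (conf(i := conf i))) (rootX p k vote conf)"
      using S unfolding SPE_def by blast
    thus "\<not> spref (R i) (chanceX p k conf (votes p (vote(i := a)))) (chanceX p k conf (votes p vote))"
      by (simp add: rootX_def)
  qed
  let ?v = "votes p vote"
  let ?cv = "card {j. j < nag p \<and> vote j = X}"
  have lv: "length ?v = nag p" by (rule len_votes)
  have cv: "cntX ?v = ?cv" by (rule cnt_votes)
  have cvn: "?cv \<le> nag p" using lv cv unfolding cntX_def by (metis length_filter_le)
  have Q01: "\<And>w. 0 \<le> Qw p k R w \<and> Qw p k R w \<le> 1" using Qw_range by blast
  show ?thesis
  proof (cases "p + k \<le> ?NX")
    case True
    hence M: "Maj p k R = X" by (simp add: Maj_def)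
    have QX: "Qw p k R X = 0"
      using Qw_zero card_neX[of p R] True k by (simp add: tb_def nag_def)
    have QSQ: "Qw p k R SQ > 0"
      using Qw_pos[OF _ k, of SQ R] True by (simp add: tb_def)
    have wX: "winner p k ?v = X"
    proof (rule ccontr)
      assume "winner p k ?v \<noteq> X"
      hence wS: "winner p k ?v = SQ" and cvl: "?cv < p + k" using cv by (auto simp: winner_def split: if_splits)
      obtain i where i: "i < nag p" "R i = X" "vote i = SQ"
      proof (rule ccontr)
        assume "\<not> thesis"
        hence "{j. j < nag p \<and> R j = X} \<subseteq> {j. j < nag p \<and> vote j = X}" using that by fastforce
        hence "?NX \<le> ?cv" by (intro card_mono) auto
        thus False using cvl True by simp
      qed
      let ?v' = "votes p (vote(i := X))"
      have lv': "length ?v' = nag p" by (rule len_votes)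
      have "{j. j < nag p \<and> (vote(i := X)) j = X} = insert i {j. j < nag p \<and> vote j = X}"
        using i by auto
      hence cv': "cntX ?v' = ?cv + 1" using i by (simp add: cnt_votes)
      have le: "chanceX p k conf ?v' \<le> chanceX p k conf ?v" using root[OF i(1), of X] i(2) by (simp add: spref_iff)
      have Gv: "chanceX p k conf ?v = Qw p k R SQ * (real ?cv / ?n)" using G[OF lv] wS cv by (simp add: lotX_def)
      have "?NX \<le> card {..<nag p}" by (intro card_mono) auto
      hence "?cv < nag p" using cvl True by simp
      hence b1: "real ?cv / ?n < 1" using np by simp
      have "Qw p k R SQ * (real ?cv / ?n) \<le> real ?cv / ?n"
        using Q01[of SQ] np by (intro mult_left_le_one_le) auto
      hence Gv1: "chanceX p k conf ?v < 1" using Gv b1 by simp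
      show False
      proof (cases "p + k \<le> ?cv + 1")
        case True
        hence "winner p k ?v' = X" using cv' by (simp add: winner_def)
        hence "chanceX p k conf ?v' = 1" using G[OF lv'] QX by (simp add: lotX_def)
        thus False using le Gv1 by simp
      next
        case False
        hence "winner p k ?v' = SQ" using cv' by (simp add: winner_def)
        hence "chanceX p k conf ?v' = Qw p k R SQ * (real (?cv + 1) / ?n)" using G[OF lv'] cv' by (simp add: lotX_def)
        moreover have "real ?cv / ?n < real (?cv + 1) / ?n" using np by (simp add: divide_strict_right_mono)
        moreover note Gv
        moreover have "Qw p k R SQ * (real ?cv / ?n) < Qw p k R SQ * (real (?cv + 1) / ?n)"
          using mult_strict_left_mono[OF \<open>real ?cv / ?n < real (?cv + 1) / ?n\<close> QSQ] .
        ultimately have "chanceX p k conf ?v < chanceX p k conf ?v'" by (simp only:)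
        thus False using le by simp
      qed
    qed
    have "chanceX p k conf ?v = 1" using G[OF lv] wX QX by (simp add: lotX_def)
    then show ?thesis using M by (simp add: rootX_def lotX_def)
  next
    case False
    hence M: "Maj p k R = SQ" by (simp add: Maj_def)
    have QSQ: "Qw p k R SQ = 0"
      using Qw_zero[of p R SQ k] False by (simp add: tb_def)
    have QX: "Qw p k R X > 0"
      using Qw_pos[OF _ k, of X R] card_neX[of p R] False k by (simp add: tb_def nag_def)
    have wSQ: "winner p k ?v = SQ"
    proof (rule ccontr)
      assume "winner p k ?v \<noteq> SQ"
      hence wX: "winner p k ?v = X" and cvl: "p + k \<le> ?cv" using cv by (auto simp: winner_def split: if_splits)
      obtain i where i: "i < nag p" "R i = SQ" "vote i = X"
      proof (rule ccontr)
        assume "\<not> thesis"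
        hence "{j. j < nag p \<and> vote j = X} \<subseteq> {j. j < nag p \<and> R j = X}" using that by fastforce
        hence "?cv \<le> ?NX" by (intro card_mono) auto
        thus False using cvl False by simp
      qed
      let ?v' = "votes p (vote(i := SQ))"
      have lv': "length ?v' = nag p" by (rule len_votes)
      have "{j. j < nag p \<and> (vote(i := SQ)) j = X} = {j. j < nag p \<and> vote j = X} - {i}"
        using i by auto
      hence cv': "cntX ?v' = ?cv - 1" using i by (simp add: cnt_votes)
      have le: "chanceX p k conf ?v \<le> chanceX p k conf ?v'" using root[OF i(1), of SQ] i(2) by (simp add: spref_iff)
      have Gv: "chanceX p k conf ?v = 1 + Qw p k R X * (real ?cv / ?n - 1)" using G[OF lv] wX cv by (simp add: lotX_def)
      have cpos: "real ?cv / ?n > 0" using cvl k np by simp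
      have "Qw p k R X * (1 - real ?cv / ?n) < 1"
      proof -
        have "Qw p k R X * (1 - real ?cv / ?n) \<le> 1 * (1 - real ?cv / ?n)"
          using Q01[of X] b_range[OF lv] cv by (intro mult_right_mono) auto
        thus ?thesis using cpos by simp
      qed
      hence Gv0: "chanceX p k conf ?v > 0" using Gv by (simp add: algebra_simps)
      show False
      proof (cases "p + k \<le> ?cv - 1")
        case False
        hence "winner p k ?v' = SQ" using cv' by (simp add: winner_def)
        hence "chanceX p k conf ?v' = 0" using G[OF lv'] QSQ by (simp add: lotX_def)
        thus False using le Gv0 by simp
      next
        case True
        hence "winner p k ?v' = X" using cv' by (simp add: winner_def)
        hence "chanceX p k conf ?v' = 1 + Qw p k R X * (real (?cv - 1) / ?n - 1)" using G[OF lv'] cv' by (simp add: lotX_def)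
        moreover have "real (?cv - 1) / ?n < real ?cv / ?n"
        proof -
          have "?cv - 1 < ?cv" using cvl k by linarith
          hence "real (?cv - 1) < real ?cv" by (simp only: of_nat_less_iff)
          thus ?thesis using np by (simp add: divide_strict_right_mono)
        qed
        moreover note Gv
        moreover have "Qw p k R X * (real (?cv - 1) / ?n - 1) < Qw p k R X * (real ?cv / ?n - 1)"
          using mult_strict_left_mono[OF _ QX] \<open>real (?cv - 1) / ?n < real ?cv / ?n\<close> by simp
        ultimately have "chanceX p k conf ?v' < chanceX p k conf ?v" by (simp only: add_less_cancel_left)
        thus False using le by simp
      qed
    qed
    have "chanceX p k conf ?v = 0" using G[OF lv] wSQ QSQ by (simp add: lotX_def)
    then show ?thesis using M by (simp add: rootX_def lotX_def)
  qed
qed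

theorem proposition5:
  fixes p k :: nat
  assumes "1 \<le> k" and "k \<le> p"
  shows "\<forall>R :: nat \<Rightarrow> opt.
           (\<forall>vote conf. SPE p k R vote conf \<longrightarrow> rootX p k vote conf = lotX (Maj p k R)) \<and>
           (\<exists>vote conf. SPE p k R vote conf \<and> rootX p k vote conf = lotX (Maj p k R))"
  using unique_part[OF assms] exist_part[OF assms] by blast

end
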